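(* Let $\rho\in\mathcal{L}_{0}$ be positive, $\delta\in(0,\alpha]$ and $k\in\mathbb{N}^{+}$. Then there is a positive integer $M$ such that any $(\rho,\delta)$-lattice $\{w_{j}\}$ on $\mathbb{D}$ can be divided into $M$ subsequences with the property that if $w_{i}$ and $w_{j}$ are two different points in the same subsequence, then $|w_{i}-w_{j}|\geq2^{k}\delta\min(\rho(w_{i}),\rho(w_{j}))$.
   Context: $\mathbb{D}$ is the open unit disc. $C_0$ is the set of continuous $\rho$ on $\mathbb{D}$ with $\rho(z)\to0$ as $|z|\to1$. $\mathcal{L}$ is the set of real $\rho\in C_0$ with $\sup_{z\ne w}|\rho(z)-\rho(w)|/|z-w|<\infty$; $\mathcal{L}_0$ is the set of $\rho\in\mathcal{L}$ such that for every $\varepsilon>0$ there is a compact $E\subset\mathbb{D}$ with $|\rho(z)-\rho(w)|\le\varepsilon|z-w|$ for $z,w\in\mathbb{D}\setminus E$. $D^r(z)=D(z,r\rho(z))$ (Euclidean disc). There are constants $\alpha>0$, $s>0$ depending only on $\rho$ (with $\alpha$ fixed) such that for $0<r\le\alpha$ a $(\rho,r)$-lattice exists, where a $(\rho,r)$-lattice is a sequence $\{w_k\}\subset\mathbb{D}$ with $\mathbb{D}=\bigcup_kD^r(w_k)$, the discs $D^{sr}(w_k)$ pairwise disjoint, and $\{D^{2\alpha}(w_k)\}$ a covering of $\mathbb{D}$ of finite multiplicity. *)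

theory Defs
  imports "HOL-Analysis.Analysis"
begin

definition unit_disc :: "complex set" where
  "unit_disc = ball 0 1"

definition C0 :: "(complex \<Rightarrow> real) set" where
  "C0 = {\<rho>. continuous_on unit_disc \<rho> \<and>
             (\<forall>\<epsilon>>0. \<exists>r<1. \<forall>z\<in>unit_disc. r < norm z \<longrightarrow> \<bar>\<rho> z\<bar> < \<epsilon>)}"

definition Lclass :: "(complex \<Rightarrow> real) set" where
  "Lclass = {\<rho>. \<rho> \<in> C0 \<and>
     (\<exists>C. \<forall>z\<in>unit_disc. \<forall>w\<in>unit_disc. \<bar>\<rho> z - \<rho> w\<bar> \<le> C * norm (z - w))}"

definition L0class :: "(complex \<Rightarrow> real) set" where
  "L0class = {\<rho>. \<rho> \<in> Lclass \<and>
     (\<forall>\<epsilon>>0. \<exists>E. compact E \<and> E \<subseteq> unit_disc \<and>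
        (\<forall>z\<in>unit_disc - E. \<forall>w\<in>unit_disc - E. \<bar>\<rho> z - \<rho> w\<bar> \<le> \<epsilon> * norm (z - w)))}"

definition rdisc :: "(complex \<Rightarrow> real) \<Rightarrow> real \<Rightarrow> complex \<Rightarrow> complex set" where
  "rdisc \<rho> r z = ball z (r * \<rho> z)"

text \<open>A (rho,r)-lattice, relative to the constants alpha and s attached to rho.\<close>
definition is_lattice ::
  "(complex \<Rightarrow> real) \<Rightarrow> real \<Rightarrow> real \<Rightarrow> real \<Rightarrow> (nat \<Rightarrow> complex) \<Rightarrow> bool" where
  "is_lattice \<rho> \<alpha> s r w \<longleftrightarrow>
     (\<forall>k. w k \<in> unit_disc) \<and>
     unit_disc = (\<Union>k. rdisc \<rho> r (w k)) \<and>
     (\<forall>i j. i \<noteq> j \<longrightarrow> rdisc \<rho> (s * r) (w i) \<inter> rdisc \<rho> (s * r) (w j) = {}) \<and>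
     unit_disc \<subseteq> (\<Union>k. rdisc \<rho> (2 * \<alpha>) (w k)) \<and>
     (\<exists>N::nat. \<forall>z\<in>unit_disc. finite {k. z \<in> rdisc \<rho> (2 * \<alpha>) (w k)} \<and>
                              card {k. z \<in> rdisc \<rho> (2 * \<alpha>) (w k)} \<le> N)"

end

theory Submission
  imports Defs
begin

definition greedy :: "(nat \<Rightarrow> nat \<Rightarrow> bool) \<Rightarrow> nat \<Rightarrow> nat" where
 "greedy E = wfrec less_than (\<lambda>f j. LEAST m. \<forall>i<j. E i j \<longrightarrow> f i \<noteq> m)"

lemma greedy_eq: "greedy E j = (LEAST m. \<forall>i<j. E i j \<longrightarrow> greedy E i \<noteq> m)"
  unfolding greedy_def by (subst wfrec[OF wf_less_than]) (simp add: cut_apply)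

lemma greedy_props:
  assumes fin: "finite {i. i<j \<and> E i j}" and cd: "card {i. i<j \<and> E i j} \<le> D"
  shows "greedy E j \<le> D" "\<And>i. i<j \<Longrightarrow> E i j \<Longrightarrow> greedy E i \<noteq> greedy E j"
proof -
  let ?F = "greedy E ` {i. i<j \<and> E i j}"
  have cF: "card ?F \<le> D" using card_image_le[OF fin, of "greedy E"] cd by linarith
  have "\<exists>m\<le>D. m \<notin> ?F"
  proof (rule ccontr)
    assume "\<not> ?thesis"
    then have "{0..D} \<subseteq> ?F" by auto
    then have "card {0..D} \<le> card ?F" using fin by (intro card_mono) auto
    then show False using cF by simp
  qed
  then obtain m where m: "m \<le> D" "m \<notin> ?F" by blast
  have P: "\<forall>i<j. E i j \<longrightarrow> greedy E i \<noteq> m" using m by auto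
  show "greedy E j \<le> D" unfolding greedy_eq[of E j]
    using Least_le[of "\<lambda>m. \<forall>i<j. E i j \<longrightarrow> greedy E i \<noteq> m", OF P] m by linarith
  fix i assume "i<j" "E i j"
  then show "greedy E i \<noteq> greedy E j" unfolding greedy_eq[of E j]
    using LeastI[of "\<lambda>m. \<forall>i<j. E i j \<longrightarrow> greedy E i \<noteq> m", OF P] by blast
qed


lemma floor_eq_close: "\<lfloor>a::real\<rfloor> = \<lfloor>b\<rfloor> \<Longrightarrow> \<bar>a - b\<bar> < 1"
proof -
  assume e: "\<lfloor>a\<rfloor> = \<lfloor>b\<rfloor>"
  have "of_int \<lfloor>a\<rfloor> \<le> a" "a < of_int \<lfloor>a\<rfloor> + 1" "of_int \<lfloor>b\<rfloor> \<le> b" "b < of_int \<lfloor>b\<rfloor> + 1"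
    by linarith+
  moreover have "real_of_int \<lfloor>a\<rfloor> = real_of_int \<lfloor>b\<rfloor>" using e by simp
  ultimately show ?thesis by linarith
qed

lemma floor_in_box: "\<bar>x::real\<bar> < A \<Longrightarrow> \<lfloor>x\<rfloor> \<in> {-\<lceil>A\<rceil>..\<lceil>A\<rceil>}"
proof -
  assume a: "\<bar>x\<bar> < A"
  have "\<lfloor>x\<rfloor> \<le> \<lceil>A\<rceil>" using a by (meson abs_le_D1 floor_le_ceiling floor_mono less_le_not_le order.trans)
  moreover have "-\<lceil>A\<rceil> \<le> \<lfloor>x\<rfloor>"
  proof -
    have "-A < x" using a by linarith
    then have "\<lfloor>-A\<rfloor> \<le> \<lfloor>x\<rfloor>" by (intro floor_mono) simp
    then show ?thesis by (simp add: ceiling_def)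
  qed
  ultimately show ?thesis by simp
qed

lemma nbr_bound:
  fixes \<rho> :: "complex \<Rightarrow> real" and w :: "nat \<Rightarrow> complex" and L r R :: real
  assumes L: "L \<ge> 0" and lip: "\<forall>a b. \<bar>\<rho> (w a) - \<rho> (w b)\<bar> \<le> L * norm (w a - w b)"
    and pos: "\<forall>a. \<rho> (w a) > 0" and r: "r > 0" and R: "R > 0"
    and sep: "\<forall>a b. a \<noteq> b \<longrightarrow> norm (w a - w b) \<ge> r * \<rho> (w b)"
  shows "finite {j. j \<noteq> i \<and> norm (w i - w j) < R * min (\<rho> (w i)) (\<rho> (w j))} \<and>
         card {j. j \<noteq> i \<and> norm (w i - w j) < R * min (\<rho> (w i)) (\<rho> (w j))}
           \<le> card ({-\<lceil>2*R*(1+L*R)/r\<rceil>..\<lceil>2*R*(1+L*R)/r\<rceil>} \<times> {-\<lceil>2*R*(1+L*R)/r\<rceil>..\<lceil>2*R*(1+L*R)/r\<rceil>})"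
proof -
  define S where "S = {j. j \<noteq> i \<and> norm (w i - w j) < R * min (\<rho> (w i)) (\<rho> (w j))}"
  define A where "A = 2*R*(1+L*R)/r"
  define T where "T = {-\<lceil>A\<rceil>..\<lceil>A\<rceil>} \<times> {-\<lceil>A\<rceil>..\<lceil>A\<rceil>}"
  define q where "q = 1 + L*R"
  have q: "q > 0" using L R unfolding q_def by (simp add: add_pos_nonneg)
  define h where "h = r * \<rho> (w i) / (2*q)"
  have h: "h > 0" using r pos q unfolding h_def by simp
  have pi: "\<rho> (w i) > 0" using pos by simp
  have hA: "R * \<rho> (w i) / h = A" unfolding h_def A_def q_def using r pi q[unfolded q_def]
    by (simp add: field_simps)
  have low: "\<rho> (w i) \<le> q * \<rho> (w j)" if "j \<in> S" for j
  proof -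
    have m: "R * min (\<rho> (w i)) (\<rho> (w j)) \<le> R * \<rho> (w j)" using R by (intro mult_left_mono) auto
    have d: "norm (w i - w j) \<le> R * \<rho> (w j)" using that m unfolding S_def by auto
    have "\<rho> (w i) - \<rho> (w j) \<le> L * norm (w i - w j)" using lip by (metis abs_le_D1)
    also have "\<dots> \<le> L * (R * \<rho> (w j))" using d L by (rule mult_left_mono)
    finally show ?thesis unfolding q_def by (simp add: algebra_simps)
  qed
  have near: "norm (w j - w i) < R * \<rho> (w i)" if "j \<in> S" for j
  proof -
    have m: "R * min (\<rho> (w i)) (\<rho> (w j)) \<le> R * \<rho> (w i)" using R by (intro mult_left_mono) auto
    show ?thesis using that m unfolding S_def by (auto simp: norm_minus_commute)
  qed
  define g where "g j = (\<lfloor>Re (w j - w i) / h\<rfloor>, \<lfloor>Im (w j - w i) / h\<rfloor>)" for j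
  have img: "g ` S \<subseteq> T"
  proof
    fix p assume "p \<in> g ` S"
    then obtain j where j: "j \<in> S" "p = g j" by auto
    have n: "norm (w j - w i) < R * \<rho> (w i)" by (rule near[OF j(1)])
    have "\<bar>Re (w j - w i)\<bar> < R * \<rho> (w i)" using abs_Re_le_cmod n by (rule le_less_trans)
    then have "\<bar>Re (w j - w i)\<bar> / h < A" using h hA by (metis divide_strict_right_mono)
    then have 1: "\<bar>Re (w j - w i) / h\<bar> < A" using h by simp
    have "\<bar>Im (w j - w i)\<bar> < R * \<rho> (w i)" using abs_Im_le_cmod n by (rule le_less_trans)
    then have "\<bar>Im (w j - w i)\<bar> / h < A" using h hA by (metis divide_strict_right_mono)
    then have 2: "\<bar>Im (w j - w i) / h\<bar> < A" using h by simp
    show "p \<in> T" unfolding T_def j(2) g_def using floor_in_box[OF 1] floor_in_box[OF 2] by simp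
  qed
  have inj: "inj_on g S"
  proof
    fix j j' assume j: "j \<in> S" and j': "j' \<in> S" and e: "g j = g j'"
    show "j = j'"
    proof (rule ccontr)
      assume ne: "j \<noteq> j'"
      have "\<bar>Re (w j - w i) / h - Re (w j' - w i) / h\<bar> < 1"
        using e unfolding g_def by (intro floor_eq_close) simp
      then have "\<bar>Re (w j - w j')\<bar> / h < 1" using h by (simp add: diff_divide_distrib[symmetric])
      then have re: "\<bar>Re (w j - w j')\<bar> < h" using h by simp
      have "\<bar>Im (w j - w i) / h - Im (w j' - w i) / h\<bar> < 1"
        using e unfolding g_def by (intro floor_eq_close) simp
      then have "\<bar>Im (w j - w j')\<bar> / h < 1" using h by (simp add: diff_divide_distrib[symmetric])
      then have im: "\<bar>Im (w j - w j')\<bar> < h" using h by simp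
      have "norm (w j - w j') < 2 * h" using cmod_le[of "w j - w j'"] re im by linarith
      also have "2 * h = r * \<rho> (w i) / q" unfolding h_def using q by simp
      also have "\<dots> \<le> r * \<rho> (w j)"
        using low[OF j] q r by (simp add: divide_le_eq mult.commute mult.left_commute)
      finally have "norm (w j' - w j) < r * \<rho> (w j)" by (simp add: norm_minus_commute)
      moreover have "r * \<rho> (w j) \<le> norm (w j' - w j)" using sep ne by auto
      ultimately show False by linarith
    qed
  qed
  have fT: "finite T" unfolding T_def by simp
  have "finite S" using inj_on_finite[OF inj img fT] .
  moreover have "card S \<le> card T" using card_inj_on_le[OF inj img fT] .
  ultimately show ?thesis unfolding S_def T_def A_def by simp
qed

theorem lemma5p6:
  fixes \<rho> :: "complex \<Rightarrow> real" and \<alpha> s \<delta> :: real and k :: nat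
  assumes "\<rho> \<in> L0class"
    and "\<forall>z\<in>unit_disc. \<rho> z > 0"
    and "\<alpha> > 0" and "s > 0"
    and "0 < \<delta>" and "\<delta> \<le> \<alpha>"
    and "k \<ge> 1"
  shows "\<exists>M::nat. M > 0 \<and>
           (\<forall>w. is_lattice \<rho> \<alpha> s \<delta> w \<longrightarrow>
              (\<exists>c::nat \<Rightarrow> nat. (\<forall>j. c j < M) \<and>
                 (\<forall>i j. i \<noteq> j \<and> c i = c j \<longrightarrow>
                    norm (w i - w j) \<ge> 2 ^ k * \<delta> * min (\<rho> (w i)) (\<rho> (w j)))))"
proof -
  obtain C where C: "\<forall>z\<in>unit_disc. \<forall>w\<in>unit_disc. \<bar>\<rho> z - \<rho> w\<bar> \<le> C * norm (z - w)"
    using assms(1) unfolding L0class_def Lclass_def by blast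
  define L where "L = max C 0"
  have L: "L \<ge> 0" unfolding L_def by simp
  have lipL: "\<forall>z\<in>unit_disc. \<forall>w\<in>unit_disc. \<bar>\<rho> z - \<rho> w\<bar> \<le> L * norm (z - w)"
  proof (intro ballI)
    fix z w assume "z \<in> unit_disc" "w \<in> unit_disc"
    then have "\<bar>\<rho> z - \<rho> w\<bar> \<le> C * norm (z - w)" using C by blast
    also have "\<dots> \<le> L * norm (z - w)" unfolding L_def by (intro mult_right_mono) auto
    finally show "\<bar>\<rho> z - \<rho> w\<bar> \<le> L * norm (z - w)" .
  qed
  define r where "r = s * \<delta>"
  define R where "R = 2 ^ k * \<delta>"
  have r: "r > 0" unfolding r_def using assms by simp
  have R: "R > 0" unfolding R_def using assms by simp
  define D where "D = card ({-\<lceil>2*R*(1+L*R)/r\<rceil>..\<lceil>2*R*(1+L*R)/r\<rceil>} \<times> {-\<lceil>2*R*(1+L*R)/r\<rceil>..\<lceil>2*R*(1+L*R)/r\<rceil>})"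
  show ?thesis
  proof (intro exI[of _ "Suc D"] conjI allI impI)
    show "0 < Suc D" by simp
    fix w assume lat: "is_lattice \<rho> \<alpha> s \<delta> w"
    have win: "\<forall>a. w a \<in> unit_disc" using lat unfolding is_lattice_def by blast
    have disj: "\<forall>a b. a \<noteq> b \<longrightarrow> rdisc \<rho> r (w a) \<inter> rdisc \<rho> r (w b) = {}"
      using lat unfolding is_lattice_def r_def by blast
    have pos: "\<forall>a. \<rho> (w a) > 0" using win assms(2) by blast
    have lip: "\<forall>a b. \<bar>\<rho> (w a) - \<rho> (w b)\<bar> \<le> L * norm (w a - w b)" using win lipL by blast
    have sep: "\<forall>a b. a \<noteq> b \<longrightarrow> norm (w a - w b) \<ge> r * \<rho> (w b)"
    proof (intro allI impI)
      fix a b :: nat assume ab: "a \<noteq> b"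
      show "norm (w a - w b) \<ge> r * \<rho> (w b)"
      proof (rule ccontr)
        assume "\<not> ?thesis"
        then have "w a \<in> rdisc \<rho> r (w b)" unfolding rdisc_def by (simp add: dist_norm norm_minus_commute)
        moreover have "w a \<in> rdisc \<rho> r (w a)" unfolding rdisc_def using r pos by simp
        ultimately show False using disj ab by blast
      qed
    qed
    define E where "E i j = (norm (w i - w j) < R * min (\<rho> (w i)) (\<rho> (w j)))" for i j
    have nb: "finite {i. i<j \<and> E i j} \<and> card {i. i<j \<and> E i j} \<le> D" for j
    proof -
      have b: "finite {i. i \<noteq> j \<and> norm (w j - w i) < R * min (\<rho> (w j)) (\<rho> (w i))} \<and>
         card {i. i \<noteq> j \<and> norm (w j - w i) < R * min (\<rho> (w j)) (\<rho> (w i))} \<le> D"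
        unfolding D_def by (rule nbr_bound[OF L lip pos r R sep])
      have sub: "{i. i<j \<and> E i j} \<subseteq> {i. i \<noteq> j \<and> norm (w j - w i) < R * min (\<rho> (w j)) (\<rho> (w i))}"
        unfolding E_def by (auto simp: norm_minus_commute min.commute)
      have "finite {i. i<j \<and> E i j}" using b sub finite_subset by blast
      moreover have "card {i. i<j \<and> E i j} \<le> D" using b sub card_mono le_trans by blast
      ultimately show ?thesis by simp
    qed
    show "\<exists>c::nat \<Rightarrow> nat. (\<forall>j. c j < Suc D) \<and>
                 (\<forall>i j. i \<noteq> j \<and> c i = c j \<longrightarrow>
                    norm (w i - w j) \<ge> 2 ^ k * \<delta> * min (\<rho> (w i)) (\<rho> (w j)))"
    proof (intro exI[of _ "greedy E"] conjI allI impI)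
      fix j show "greedy E j < Suc D" using greedy_props(1)[of j E D] nb by auto
    next
      fix i j assume h: "i \<noteq> j \<and> greedy E i = greedy E j"
      have "\<not> E i j"
      proof
        assume e: "E i j"
        show False
        proof (cases "i < j")
          case True then show False using greedy_props(2)[of j E D i] nb e h by auto
        next
          case False
          then have "j < i" using h by auto
          moreover have "E j i" using e unfolding E_def by (simp add: norm_minus_commute min.commute)
          ultimately show False using greedy_props(2)[of i E D j] nb h by auto
        qed
      qed
      then show "norm (w i - w j) \<ge> 2 ^ k * \<delta> * min (\<rho> (w i)) (\<rho> (w j))"
        unfolding E_def R_def by simp
    qed
  qed
qed

end
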